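(* Let $d\ge 2$ and let $\{Q_j\}_{j=1}^{d^2}$ be a normal quasiprobability representation (NQPR) in dimension $d$. Then $$N^-\le N(\{Q_j\})\le N^+,\qquad N^-=\frac{\sqrt{d+1}-1}{d},\quad N^+=\frac{(d-1)\sqrt{d+1}-1}{d}.$$ The lower bound is attained if and only if there is a SIC $\{\Pi_j\}_{j=1}^{d^2}$ in dimension $d$ such that $Q_j=Q_j^-$ for all $j$. If $\{Q_j\}$ is group covariant, then the upper bound is attained if and only if there is a SIC $\{\Pi_j\}_{j=1}^{d^2}$ such that $Q_j=Q_j^+$ for all $j$.
   Context: A normal quasiprobability representation (NQPR) in dimension $d$ is a family $\{Q_j\}_{j=1}^{d^2}$ of Hermitian operators on $\mathbb{C}^d$ with $\operatorname{tr}(Q_j)=1$ and $\operatorname{tr}(Q_jQ_k)=d\,\delta_{jk}$ for all $j,k$ (so they form an orthogonal operator basis, and $\sum_j Q_j=d\cdot 1$). The negativity of a density operator $\rho$ with respect to $\{Q_j\}$ is $N(\rho)=\max\{0,-\min_j\operatorname{tr}(\rho Q_j)\}$, and the negativity $N(\{Q_j\})$ of the NQPR is the maximum of $N(\rho)$ over all density operators $\rho$ on $\mathbb{C}^d$ (equivalently, $|\min_j\lambda_{\min}(Q_j)|$). A SIC in dimension $d$ is a set $\{\Pi_j\}_{j=1}^{d^2}$ of rank-one projectors on $\mathbb{C}^d$ with $\operatorname{tr}(\Pi_j\Pi_k)=(d\delta_{jk}+1)/(d+1)$. Given a SIC, define $Q_j^\pm=\mp\sqrt{d+1}\,\Pi_j+\frac{1}{d}(1\pm\sqrt{d+1})$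 (where $1$ denotes the identity operator in the operator term). The symmetry group of $\{Q_j\}$ is the group of unitaries $U$ on $\mathbb{C}^d$ such that $\{UQ_jU^\dagger\}_j=\{Q_j\}_j$ as sets; $\{Q_j\}$ is group covariant if its symmetry group acts transitively (by conjugation) on $\{Q_j\}$. *)

theory Defs
  imports "HOL-Analysis.Analysis"
begin

text \<open>Operators on C^d are represented as matrices complex^'n^'n, with d = CARD('n).\<close>

definition mtrace :: "complex^'n^'n \<Rightarrow> complex" where
  "mtrace A = (\<Sum>i\<in>UNIV. A $ i $ i)"

definition adj :: "complex^'n^'n \<Rightarrow> complex^'n^'n" where
  "adj A = (\<chi> i j. cnj (A $ j $ i))"

definition hermitian :: "complex^'n^'n \<Rightarrow> bool" where
  "hermitian A \<longleftrightarrow> adj A = A"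

definition psd :: "complex^'n^'n \<Rightarrow> bool" where
  "psd A \<longleftrightarrow> hermitian A \<and>
     (\<forall>v::complex^'n. 0 \<le> Re (\<Sum>i\<in>UNIV. cnj (v $ i) * (A *v v) $ i))"

definition density :: "complex^'n^'n \<Rightarrow> bool" where
  "density \<rho> \<longleftrightarrow> psd \<rho> \<and> mtrace \<rho> = 1"

definition unitary :: "complex^'n^'n \<Rightarrow> bool" where
  "unitary U \<longleftrightarrow> U ** adj U = mat 1 \<and> adj U ** U = mat 1"

definition idx :: "'n itself \<Rightarrow> nat set" where
  "idx _ = {1..CARD('n)^2}"

definition nqpr :: "(nat \<Rightarrow> complex^'n^'n) \<Rightarrow> bool" where
  "nqpr Q \<longleftrightarrow> (\<forall>j\<in>idx TYPE('n). hermitian (Q j) \<and> mtrace (Q j) = 1) \<and>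
     (\<forall>j\<in>idx TYPE('n). \<forall>k\<in>idx TYPE('n).
        mtrace (Q j ** Q k) = (if j = k then of_nat CARD('n) else 0))"

text \<open>Negativity of a state w.r.t. Q: max{0, - min_j tr(rho Q_j)} (tr(rho Q_j) is real).\<close>
definition neg_state :: "(nat \<Rightarrow> complex^'n^'n) \<Rightarrow> complex^'n^'n \<Rightarrow> real" where
  "neg_state Q \<rho> = max 0 (- (MIN j\<in>idx TYPE('n). Re (mtrace (\<rho> ** Q j))))"

definition negativity :: "(nat \<Rightarrow> complex^'n^'n) \<Rightarrow> real" where
  "negativity Q = (SUP \<rho>\<in>{\<rho>. density \<rho>}. neg_state Q \<rho>)"

definition rank_one_projector :: "complex^'n^'n \<Rightarrow> bool" where
  "rank_one_projector A \<longleftrightarrow> (\<exists>\<psi>::complex^'n. norm \<psi> = 1 \<and>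
      A = (\<chi> i j. \<psi> $ i * cnj (\<psi> $ j)))"

definition sic :: "(nat \<Rightarrow> complex^'n^'n) \<Rightarrow> bool" where
  "sic P \<longleftrightarrow> (\<forall>j\<in>idx TYPE('n). rank_one_projector (P j)) \<and>
     (\<forall>j\<in>idx TYPE('n). \<forall>k\<in>idx TYPE('n).
        mtrace (P j ** P k) =
          of_real ((real CARD('n) * (if j = k then 1 else 0) + 1) / (real CARD('n) + 1)))"

definition Qplus :: "(nat \<Rightarrow> complex^'n^'n) \<Rightarrow> nat \<Rightarrow> complex^'n^'n" where
  "Qplus P j = (- sqrt (real CARD('n) + 1)) *\<^sub>R P j
      + ((1 + sqrt (real CARD('n) + 1)) / real CARD('n)) *\<^sub>R mat 1"

definition Qminus :: "(nat \<Rightarrow> complex^'n^'n) \<Rightarrow> nat \<Rightarrow> complex^'n^'n" where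
  "Qminus P j = sqrt (real CARD('n) + 1) *\<^sub>R P j
      + ((1 - sqrt (real CARD('n) + 1)) / real CARD('n)) *\<^sub>R mat 1"

definition sym_group :: "(nat \<Rightarrow> complex^'n^'n) \<Rightarrow> (complex^'n^'n) set" where
  "sym_group Q = {U. unitary U \<and>
      (\<lambda>j. U ** Q j ** adj U) ` idx TYPE('n) = Q ` idx TYPE('n)}"

definition group_covariant :: "(nat \<Rightarrow> complex^'n^'n) \<Rightarrow> bool" where
  "group_covariant Q \<longleftrightarrow> (\<forall>j\<in>idx TYPE('n). \<forall>k\<in>idx TYPE('n).
      \<exists>U\<in>sym_group Q. U ** Q j ** adj U = Q k)"

end

theory Submission
  imports Defs
begin

definition cinner :: "complex^'n \<Rightarrow> complex^'n \<Rightarrow> complex" where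
  "cinner u v = (\<Sum>i\<in>UNIV. cnj (u $ i) * v $ i)"

definition outer :: "complex^'n \<Rightarrow> complex^'n \<Rightarrow> complex^'n^'n" where
  "outer u v = (\<chi> i j. u $ i * cnj (v $ j))"

lemma cinner_adj: "cinner v (A *v w) = cinner (adj A *v v) w"
  unfolding cinner_def adj_def matrix_vector_mult_def
  by (simp add: sum_distrib_left sum_distrib_right mult_ac cnj_sum) (rule sum.swap)

lemma cinner_herm: "hermitian A \<Longrightarrow> cinner v (A *v w) = cinner (A *v v) w"
  unfolding hermitian_def using cinner_adj[of v A w] by simp

lemma cinner_cnj: "cnj (cinner u v) = cinner v u"
  unfolding cinner_def by (simp add: cnj_sum mult.commute)

lemma cinner_add_right: "cinner u (v + w) = cinner u v + cinner u w"
  unfolding cinner_def by (simp add: distrib_left sum.distrib)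
lemma cinner_diff_right: "cinner u (v - w) = cinner u v - cinner u w"
  unfolding cinner_def by (simp add: right_diff_distrib sum_subtractf)
lemma cinner_add_left: "cinner (v + w) u = cinner v u + cinner w u"
  unfolding cinner_def by (simp add: distrib_right sum.distrib)
lemma cinner_diff_left: "cinner (v - w) u = cinner v u - cinner w u"
  unfolding cinner_def by (simp add: left_diff_distrib sum_subtractf)
lemma cinner_scale_right: "cinner u (c *s v) = c * cinner u v"
  unfolding cinner_def by (simp add: sum_distrib_left mult_ac)
lemma cinner_scale_left: "cinner (c *s u) v = cnj c * cinner u v"
  unfolding cinner_def by (simp add: sum_distrib_left mult_ac)
lemma scaleR_vec_scale: "c *\<^sub>R (x::complex^'n) = of_real c *s x"
  unfolding vec_eq_iff vector_scaleR_component vector_smult_component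
  by (metis scaleR_conv_of_real)
lemma cinner_scaleR_right: "cinner u (c *\<^sub>R v) = of_real c * cinner u v"
  unfolding scaleR_vec_scale cinner_scale_right ..
lemma cinner_scaleR_left: "cinner (c *\<^sub>R u) v = of_real c * cinner u v"
  unfolding scaleR_vec_scale cinner_scale_left by simp
lemma cinner_sum_right: "cinner u (sum f S) = (\<Sum>x\<in>S. cinner u (f x))"
  unfolding cinner_def by (simp add: sum_distrib_left sum_component) (rule sum.swap)
lemma cinner_zero_right[simp]: "cinner u 0 = 0" unfolding cinner_def by simp
lemma cinner_zero_left[simp]: "cinner 0 u = 0" unfolding cinner_def by simp

lemma inner_cinner: "inner x y = Re (cinner x y)"
  unfolding cinner_def inner_vec_def inner_complex_def by (simp add: Re_sum)

lemma cinner_self: "cinner x x = of_real ((norm x)^2)"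
proof -
  have "cinner x x = (\<Sum>i\<in>UNIV. of_real ((cmod (x$i))^2))"
    unfolding cinner_def by (rule sum.cong, simp, metis complex_norm_square mult.commute of_real_power)
  also have "\<dots> = of_real (\<Sum>i\<in>UNIV. (cmod (x$i))^2)" by simp
  also have "(\<Sum>i\<in>UNIV. (cmod (x$i))^2) = (norm x)^2"
    unfolding norm_vec_def L2_set_def by (simp add: sum_nonneg)
  finally show ?thesis .
qed

lemma cinner_self_eq_0: "cinner x x = 0 \<longleftrightarrow> x = 0"
  by (simp add: cinner_self)

lemma outer_mult_vec: "outer u v *v w = cinner v w *s u"
  unfolding outer_def cinner_def matrix_vector_mult_def
  by (vector sum_distrib_left mult_ac)

lemma trace_outer_left: "mtrace (outer u u ** M) = cinner u (M *v u)"
  unfolding mtrace_def outer_def cinner_def matrix_matrix_mult_def matrix_vector_mult_def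
  by (simp add: sum_distrib_left mult_ac) (rule sum.swap)

lemma trace_comm: "mtrace (A ** B) = mtrace (B ** A)"
  unfolding mtrace_def matrix_matrix_mult_def
  by (simp add: mult.commute) (rule sum.swap)

lemma psd_form: "psd A \<Longrightarrow> 0 \<le> Re (cinner v (A *v v))"
  unfolding psd_def cinner_def by blast

lemma herm_form_real: "hermitian A \<Longrightarrow> cinner v (A *v v) = of_real (Re (cinner v (A *v v)))"
proof -
  assume h: "hermitian A"
  have "cnj (cinner v (A *v v)) = cinner v (A *v v)"
    using cinner_cnj[of v "A *v v"] cinner_herm[OF h, of v v] by simp
  then have "Im (cinner v (A *v v)) = 0" by (metis cnj.sel(2) neg_equal_zero)
  then show ?thesis by (simp add: complex_eq_iff)
qed


lemma mv_scaleR: "A *v (c *\<^sub>R x) = c *\<^sub>R (A *v (x::complex^'n))"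
  unfolding matrix_vector_mult_def by (vector scaleR_conv_of_real sum_distrib_left mult_ac)

lemma mv_scale: "A *v (c *s x) = c *s (A *v (x::complex^'n))"
  unfolding matrix_vector_mult_def by (vector sum_distrib_left mult_ac)

lemma cont_cinner: "continuous_on UNIV (\<lambda>x. cinner u x)"
  unfolding cinner_def by (intro continuous_intros)

lemma cont_form: "continuous_on UNIV (\<lambda>x. Re (cinner x (A *v x)))"
  unfolding cinner_def matrix_vector_mult_def by (simp, intro continuous_intros)

definition orthonormal :: "(complex^'n) set \<Rightarrow> bool" where
  "orthonormal S \<longleftrightarrow> (\<forall>u\<in>S. \<forall>v\<in>S. cinner u v = (if u = v then 1 else 0))"

lemma orth_card:
  fixes S :: "(complex^'n) set"
  assumes fin: "finite S" and on: "orthonormal S"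
  shows "card S \<le> CARD('n)"
proof -
  define T where "T = S \<union> (\<lambda>u. \<i> *s u) ` S"
  have ii: "cinner u (\<i> *s v) = \<i> * cinner u v" "cinner (\<i> *s u) v = - \<i> * cinner u v"
    "cinner (\<i> *s u) (\<i> *s v) = cinner u v" for u v :: "complex^'n"
    by (simp_all add: cinner_scale_left cinner_scale_right)
  have on': "\<And>u v. u \<in> S \<Longrightarrow> v \<in> S \<Longrightarrow> cinner u v = (if u = v then 1 else 0)"
    using on unfolding orthonormal_def by blast
  have inj: "inj (\<lambda>u::complex^'n. \<i> *s u)"
    by (rule injI) (metis (no_types, lifting) vector_smult_assoc vector_smult_lid
        complex_i_mult_minus mult_minus_left mult_1_left vector_sneg_minus1 neg_equal_iff_equal)
  have disj: "S \<inter> (\<lambda>u. \<i> *s u) ` S = {}"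
  proof (rule ccontr)
    assume "S \<inter> (\<lambda>u. \<i> *s u) ` S \<noteq> {}"
    then obtain u v where uv: "u \<in> S" "v \<in> S" "u = \<i> *s v" by blast
    have "cinner u u = \<i> * cinner u v" using uv ii(1) by simp
    then show False using on'[OF uv(1) uv(1)] on'[OF uv(1) uv(2)]
      by (auto split: if_splits simp: complex_eq_iff)
  qed
  have cardT: "card T = 2 * card S"
    unfolding T_def using fin disj inj
    by (simp add: card_Un_disjoint card_image inj_on_subset)
  have nz: "0 \<notin> T"
  proof
    assume "0 \<in> T"
    then have "0 \<in> S" unfolding T_def by (auto simp: vector_mul_eq_0)
    then show False using on'[of 0 0] by simp
  qed
  have po: "pairwise orthogonal T"
    unfolding pairwise_def orthogonal_def T_def inner_cinner
    using on' by (auto simp: ii)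
  have "independent T" by (rule pairwise_orthogonal_independent[OF po nz])
  then have "card T \<le> DIM(complex^'n)" using independent_bound by blast
  then show ?thesis using cardT by simp
qed

lemma orth_exists:
  fixes S :: "(complex^'n) set"
  assumes fin: "finite S" and on: "orthonormal S" and lt: "card S < CARD('n)"
  shows "\<exists>x. x \<noteq> 0 \<and> (\<forall>u\<in>S. cinner u x = 0)"
proof -
  define T where "T = S \<union> (\<lambda>u. \<i> *s u) ` S"
  have "finite T" unfolding T_def using fin by simp
  then have "dim T \<le> card T" by (rule dim_le_card')
  also have "card T \<le> card S + card S" unfolding T_def
    by (metis card_Un_le card_image_le fin add_le_mono order_trans le_refl)
  finally have dT: "dim T < DIM(complex^'n)" using lt by simp
  obtain x :: "complex^'n" where x: "x \<noteq> 0" "\<And>y. y \<in> span T \<Longrightarrow> orthogonal x y"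
    using orthogonal_to_subspace_exists[OF dT] by blast
  have "cinner u x = 0" if u: "u \<in> S" for u
  proof -
    have "orthogonal x u" "orthogonal x (\<i> *s u)"
      using x(2) u unfolding T_def by (auto intro: span_base)
    then have "Re (cinner x u) = 0" "Re (cinner x (\<i> *s u)) = 0"
      unfolding orthogonal_def inner_cinner by auto
    then have "Re (cinner u x) = 0" "Im (cinner u x) = 0"
      using cinner_cnj[of u x] by (auto simp: cinner_scale_right) (metis complex_cnj_zero_iff complex_eq_iff zero_complex.sel)+
    then show ?thesis by (simp add: complex_eq_iff)
  qed
  then show ?thesis using x by blast
qed


lemma quad_expand:
  "cinner (v + t *\<^sub>R w) (M *v (v + t *\<^sub>R w)) =
     cinner v (M *v v) + of_real t * (cinner v (M *v w) + cinner w (M *v v)) + of_real (t^2) * cinner w (M *v w)"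
proof -
  have "cinner (v + t *\<^sub>R w) (M *v (v + t *\<^sub>R w)) =
     cinner v (M *v v) + of_real t * cinner v (M *v w) + of_real t * cinner w (M *v v) + (of_real t * of_real t) * cinner w (M *v w)"
    by (simp only: matrix_vector_right_distrib mv_scaleR cinner_add_left cinner_add_right
      cinner_scaleR_left cinner_scaleR_right mult.assoc distrib_left add.assoc) (simp only: add.left_commute)
  then show ?thesis by (simp only: power2_eq_square of_real_mult distrib_left add.assoc)
qed

lemma quad_nonneg_lin0:
  fixes a h :: real
  assumes "\<And>t. 0 \<le> 2 * t * a + t^2 * h" and "0 \<le> h"
  shows "a = 0"
proof (rule ccontr)
  assume "a \<noteq> 0"
  define t where "t = - a / (h + 1)"
  have hp: "h + 1 > 0" using assms(2) by simp
  have "0 \<le> 2 * t * a + t^2 * h" by (rule assms(1))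
  also have "\<dots> \<le> 2 * t * a + t^2 * (h + 1)" by (simp add: mult_left_mono)
  also have "t * (h + 1) = - a" unfolding t_def using hp by simp
  then have "2 * t * a + t^2 * (h + 1) = t * a" by (simp add: power2_eq_square algebra_simps)
  also have "t * a = - (a^2 / (h+1))" unfolding t_def by (simp add: power2_eq_square)
  also have "\<dots> < 0" using \<open>a \<noteq> 0\<close> hp by simp
  finally show False by simp
qed

lemma eig_step:
  fixes A :: "complex^'n^'n" and S :: "(complex^'n) set"
  assumes herm: "hermitian A" and fin: "finite S" and on: "orthonormal S"
    and eig: "\<forall>u\<in>S. \<exists>\<mu>. A *v u = of_real \<mu> *s u" and lt: "card S < CARD('n)"
  shows "\<exists>v \<mu>. v \<notin> S \<and> cinner v v = 1 \<and> (\<forall>u\<in>S. cinner u v = 0) \<and> A *v v = of_real \<mu> *s v"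
proof -
  define W where "W = {x. \<forall>u\<in>S. cinner u x = 0}"
  have W_add: "x + y \<in> W" if "x \<in> W" "y \<in> W" for x y
    using that unfolding W_def by (simp add: cinner_add_right)
  have W_scaleR: "c *\<^sub>R x \<in> W" if "x \<in> W" for x c
    using that unfolding W_def by (simp add: cinner_scaleR_right)
  have W_scale: "c *s x \<in> W" if "x \<in> W" for x c
    using that unfolding W_def by (simp add: cinner_scale_right)
  have W_eq: "W = (\<Inter>u\<in>S. {x. cinner u x = 0})" unfolding W_def by auto
  have clW: "closed W" unfolding W_eq
    by (intro closed_INT ballI closed_Collect_eq cont_cinner continuous_on_const)
  obtain x0 where x0: "x0 \<noteq> 0" "x0 \<in> W" using orth_exists[OF fin on lt] unfolding W_def by blast
  define K where "K = W \<inter> sphere 0 1"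
  have cK: "compact K" unfolding K_def using compact_Int_closed[OF compact_sphere clW, of 0 1] by (simp add: Int_commute)
  have "(1 / norm x0) *\<^sub>R x0 \<in> K" unfolding K_def using x0 W_scaleR by simp
  then have neK: "K \<noteq> {}" by blast
  define f where "f x = Re (cinner x (A *v x))" for x
  have cf: "continuous_on K f" unfolding f_def
    using cont_form continuous_on_subset by blast
  obtain v where vK: "v \<in> K" and vmin: "\<And>y. y \<in> K \<Longrightarrow> f v \<le> f y"
    using continuous_attains_inf[OF cK neK cf] by blast
  define \<mu> where "\<mu> = f v"
  have vW: "v \<in> W" and nv: "norm v = 1" using vK unfolding K_def by auto
  have vv: "cinner v v = 1" using nv by (simp add: cinner_self)
  have f_scale: "f (c *\<^sub>R x) = c^2 * f x" for c x
    unfolding f_def by (simp add: mv_scaleR cinner_scaleR_left cinner_scaleR_right power2_eq_square)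
  have claim1: "\<mu> * (norm w)^2 \<le> f w" if wW: "w \<in> W" for w
  proof (cases "w = 0")
    case True then show ?thesis by (simp add: f_def)
  next
    case False
    have "(1 / norm w) *\<^sub>R w \<in> K" unfolding K_def using wW W_scaleR False by simp
    then have "\<mu> \<le> (1 / norm w)^2 * f w" using vmin f_scale unfolding \<mu>_def by metis
    then show ?thesis using False by (simp add: field_simps power2_eq_square)
  qed
  define Bv where "Bv = A *v v - \<mu> *\<^sub>R v"
  have claim2: "Re (cinner w Bv) = 0" if wW: "w \<in> W" for w
  proof -
    define a where "a = Re (cinner w (A *v v)) - \<mu> * Re (cinner w v)"
    define h where "h = f w - \<mu> * (norm w)^2"
    have hn: "0 \<le> h" using claim1[OF wW] unfolding h_def by simp
    have r1: "Re (cinner v (A *v w)) = Re (cinner w (A *v v))"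
      using cinner_herm[OF herm, of v w] cinner_cnj[of w "A *v v"] by (metis cnj.sel(1))
    have r2: "Re (cinner v w) = Re (cinner w v)"
      using cinner_cnj[of w v] by (metis complex_cnj_cnj cnj.sel(1))
    have "0 \<le> 2 * t * a + t^2 * h" for t
    proof -
      have "v + t *\<^sub>R w \<in> W" using vW wW W_add W_scaleR by blast
      then have "\<mu> * (norm (v + t *\<^sub>R w))^2 \<le> f (v + t *\<^sub>R w)" by (rule claim1)
      moreover have "f (v + t *\<^sub>R w) = \<mu> + t * (2 * Re (cinner w (A *v v))) + t^2 * f w"
        unfolding f_def using quad_expand[of v t w A] r1 by (simp add: \<mu>_def f_def)
      moreover have "(norm (v + t *\<^sub>R w))^2 = 1 + t * (2 * Re (cinner w v)) + t^2 * (norm w)^2"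
      proof -
        have "cinner (v + t *\<^sub>R w) (mat 1 *v (v + t *\<^sub>R w)) =
          cinner v (mat 1 *v v) + of_real t * (cinner v (mat 1 *v w) + cinner w (mat 1 *v v)) + of_real (t^2) * cinner w (mat 1 *v w)"
          by (rule quad_expand)
        then have "cinner (v + t *\<^sub>R w) (v + t *\<^sub>R w) =
          cinner v v + of_real t * (cinner v w + cinner w w) + of_real (t^2) * cinner w w
            + of_real t * (cinner w v - cinner w w)"
          by (simp add: algebra_simps)
        then have "Re (cinner (v + t *\<^sub>R w) (v + t *\<^sub>R w)) =
          Re (cinner v v) + t * (Re (cinner v w) + Re (cinner w v)) + t^2 * Re (cinner w w)"
          by (simp add: algebra_simps)
        then show ?thesis using r2 nv by (simp add: cinner_self algebra_simps)
      qed
      ultimately show ?thesis unfolding a_def h_def by (simp add: algebra_simps power2_eq_square)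
    qed
    then have "a = 0" using quad_nonneg_lin0 hn by blast
    then show ?thesis unfolding a_def Bv_def by (simp add: cinner_diff_right cinner_scaleR_right)
  qed
  have claim3: "cinner w Bv = 0" if wW: "w \<in> W" for w
  proof -
    have "Re (cinner w Bv) = 0" by (rule claim2[OF wW])
    moreover have "Re (cinner (\<i> *s w) Bv) = 0" by (rule claim2[OF W_scale[OF wW]])
    then have "Im (cinner w Bv) = 0" by (simp add: cinner_scale_left)
    ultimately show ?thesis by (simp add: complex_eq_iff)
  qed
  have BvW: "Bv \<in> W" unfolding W_def
  proof (intro CollectI ballI)
    fix u assume uS: "u \<in> S"
    obtain l where l: "A *v u = of_real l *s u" using eig uS by blast
    have "cinner u (A *v v) = cinner (A *v u) v" by (rule cinner_herm[OF herm])
    also have "\<dots> = 0" using vW uS unfolding W_def by (simp add: l cinner_scale_left)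
    finally show "cinner u Bv = 0" using vW uS unfolding W_def Bv_def
      by (simp add: cinner_diff_right cinner_scaleR_right)
  qed
  have "cinner Bv Bv = 0" by (rule claim3[OF BvW])
  then have "Bv = 0" by (simp add: cinner_self_eq_0)
  then have Av: "A *v v = of_real \<mu> *s v" unfolding Bv_def by (simp add: scaleR_vec_scale)
  have "v \<notin> S" using vW vv unfolding W_def by auto
  then show ?thesis using vv vW Av unfolding W_def by blast
qed


lemma orthonormal_insert:
  assumes "orthonormal S" "cinner v v = 1" "\<forall>u\<in>S. cinner u v = 0"
  shows "orthonormal (insert v S)"
proof -
  have on: "\<And>a b. a \<in> S \<Longrightarrow> b \<in> S \<Longrightarrow> cinner a b = (if a = b then 1 else 0)"
    using assms(1) unfolding orthonormal_def by blast
  have vS: "cinner v u = 0" if "u \<in> S" for u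
    using assms(3) that cinner_cnj[of u v] by simp
  have nS: "v \<notin> S" using assms(2,3) by force
  show ?thesis unfolding orthonormal_def
  proof (intro ballI)
    fix a b assume a: "a \<in> insert v S" and b: "b \<in> insert v S"
    show "cinner a b = (if a = b then 1 else 0)"
    proof (cases "a = v")
      case True
      then show ?thesis using b assms(2) vS nS by (cases "b = v") auto
    next
      case False
      then have aS: "a \<in> S" using a by simp
      show ?thesis
      proof (cases "b = v")
        case True then show ?thesis using aS assms(3) nS by auto
      next
        case False then show ?thesis using aS b on by simp
      qed
    qed
  qed
qed

lemma spectral_sets:
  fixes A :: "complex^'n^'n"
  assumes herm: "hermitian A"
  shows "k \<le> CARD('n) \<Longrightarrow> \<exists>S. finite S \<and> card S = k \<and> orthonormal S \<and>
           (\<forall>u\<in>S. \<exists>\<mu>. A *v u = of_real \<mu> *s u)"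
proof (induction k)
  case 0 then show ?case by (intro exI[of _ "{}"]) (simp add: orthonormal_def)
next
  case (Suc k)
  then obtain S where S: "finite S" "card S = k" "orthonormal S" "\<forall>u\<in>S. \<exists>\<mu>. A *v u = of_real \<mu> *s u"
    by auto
  obtain v \<mu> where v: "v \<notin> S" "cinner v v = 1" "\<forall>u\<in>S. cinner u v = 0" "A *v v = of_real \<mu> *s v"
    using eig_step[OF herm S(1) S(3) S(4)] S(2) Suc.prems by auto
  have "orthonormal (insert v S)" by (rule orthonormal_insert[OF S(3) v(2) v(3)])
  moreover have "card (insert v S) = Suc k" using S(1,2) v(1) by simp
  moreover have "\<forall>u\<in>insert v S. \<exists>\<mu>. A *v u = of_real \<mu> *s u" using S(4) v(4) by blast
  ultimately show ?case using S(1) by blast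
qed

lemma orth_complete:
  fixes S :: "(complex^'n) set"
  assumes fin: "finite S" and on: "orthonormal S" and card: "card S = CARD('n)"
  shows "x = (\<Sum>u\<in>S. cinner u x *s u)"
proof (rule ccontr)
  assume ne: "x \<noteq> (\<Sum>u\<in>S. cinner u x *s u)"
  define w where "w = x - (\<Sum>u\<in>S. cinner u x *s u)"
  have wnz: "w \<noteq> 0" using ne unfolding w_def by simp
  have on': "\<And>u v. u \<in> S \<Longrightarrow> v \<in> S \<Longrightarrow> cinner u v = (if u = v then 1 else 0)"
    using on unfolding orthonormal_def by blast
  have orth: "cinner u' w = 0" if "u' \<in> S" for u'
  proof -
    have "cinner u' (\<Sum>u\<in>S. cinner u x *s u) = (\<Sum>u\<in>S. cinner u x * cinner u' u)"
      by (simp add: cinner_sum_right cinner_scale_right)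
    also have "\<dots> = (\<Sum>u\<in>S. if u' = u then cinner u x else 0)"
      by (rule sum.cong) (use on' that in auto)
    also have "\<dots> = cinner u' x" using that fin by simp
    finally show ?thesis unfolding w_def by (simp add: cinner_diff_right)
  qed
  define e where "e = (1 / norm w) *\<^sub>R w"
  have ee: "cinner e e = 1" unfolding e_def using wnz
    by (simp add: cinner_scaleR_left cinner_scaleR_right cinner_self power2_eq_square)
  have eo: "\<forall>u\<in>S. cinner u e = 0" unfolding e_def using orth by (simp add: cinner_scaleR_right)
  have "e \<notin> S" using ee eo by auto
  moreover have "orthonormal (insert e S)" by (rule orthonormal_insert[OF on ee eo])
  then have "card (insert e S) \<le> CARD('n)" using orth_card fin by blast
  ultimately show False using card fin by simp
qed

lemma outer_sum_id:
  fixes S :: "(complex^'n) set"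
  assumes fin: "finite S" and on: "orthonormal S" and card: "card S = CARD('n)"
  shows "(\<Sum>u\<in>S. outer u u) = mat 1"
proof -
  have "(\<Sum>u\<in>S. outer u u) $ i $ j = mat 1 $ i $ j" for i j
  proof -
    have "axis j 1 = (\<Sum>u\<in>S. cinner u (axis j 1) *s u)" by (rule orth_complete[OF fin on card])
    then have "axis j 1 $ i = (\<Sum>u\<in>S. cinner u (axis j 1) *s u) $ i" by simp
    also have "\<dots> = (\<Sum>u\<in>S. cinner u (axis j 1) * u $ i)"
      unfolding sum_component vector_smult_component ..
    finally have "axis j 1 $ i = (\<Sum>u\<in>S. cinner u (axis j 1) * u $ i)" .
    moreover have "cinner u (axis j 1) = cnj (u $ j)" for u :: "complex^'n"
      unfolding cinner_def axis_def by (simp add: if_distrib cong: if_cong)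
    ultimately show ?thesis
      by (simp add: sum_component outer_def mat_def axis_def mult.commute)
  qed
  then show ?thesis by (simp add: vec_eq_iff)
qed

lemma mtrace_sum: "mtrace (sum f S) = (\<Sum>x\<in>S. mtrace (f x))"
  unfolding mtrace_def by (simp add: sum_component) (rule sum.swap)

lemma matrix_sum_left: "(sum f S) ** M = (\<Sum>x\<in>S. f x ** (M::complex^'n^'n))"
  unfolding vec_eq_iff matrix_matrix_mult_def sum_component vec_lambda_beta sum_distrib_right
  by (intro allI) (rule sum.swap)

lemma matrix_sum_right: "M ** (sum f S) = (\<Sum>x\<in>S. M ** (f x::complex^'n^'n))"
  unfolding vec_eq_iff matrix_matrix_mult_def sum_component vec_lambda_beta sum_distrib_left
  by (intro allI) (rule sum.swap)

lemma trace_basis: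
  fixes S :: "(complex^'n) set"
  assumes id: "(\<Sum>u\<in>S. outer u u) = mat 1"
  shows "mtrace M = (\<Sum>u\<in>S. cinner u (M *v u))"
proof -
  have "mtrace M = mtrace ((\<Sum>u\<in>S. outer u u) ** M)" using id by simp
  also have "\<dots> = (\<Sum>u\<in>S. cinner u (M *v u))"
    by (simp add: matrix_sum_left mtrace_sum trace_outer_left)
  finally show ?thesis .
qed

lemma mult_outer: "M ** outer u v = outer (M *v u) v"
  unfolding outer_def matrix_matrix_mult_def matrix_vector_mult_def
  by (simp add: vec_eq_iff sum_distrib_left mult_ac)

lemma outer_scale: "outer (of_real c *s u) v = c *\<^sub>R outer u v"
  unfolding outer_def vec_eq_iff vector_scaleR_component vector_smult_component vec_lambda_beta
  by (simp add: scaleR_conv_of_real)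

definition spec :: "complex^'n^'n \<Rightarrow> (complex^'n) set \<Rightarrow> (complex^'n \<Rightarrow> real) \<Rightarrow> bool" where
  "spec A S lam \<longleftrightarrow> finite S \<and> card S = CARD('n) \<and> orthonormal S \<and>
     (\<forall>u\<in>S. A *v u = of_real (lam u) *s u) \<and> (\<Sum>u\<in>S. outer u u) = mat 1"

lemma spectral:
  fixes A :: "complex^'n^'n"
  assumes herm: "hermitian A"
  shows "\<exists>S lam. spec A S lam"
proof -
  obtain S where S: "finite S" "card S = CARD('n)" "orthonormal S" "\<forall>u\<in>S. \<exists>\<mu>. A *v u = of_real \<mu> *s u"
    using spectral_sets[OF herm, of "CARD('n)"] by auto
  define lam where "lam u = (SOME \<mu>. A *v u = of_real \<mu> *s u)" for u
  have "\<forall>u\<in>S. A *v u = of_real (lam u) *s u"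
    unfolding lam_def using S(4) by (metis (mono_tags, lifting) someI_ex)
  then show ?thesis unfolding spec_def using S outer_sum_id[OF S(1,3,2)] by blast
qed

lemma spec_expand:
  assumes "spec A S lam"
  shows "A = (\<Sum>u\<in>S. lam u *\<^sub>R outer u u)"
proof -
  have "A = A ** (\<Sum>u\<in>S. outer u u)" using assms unfolding spec_def by simp
  also have "\<dots> = (\<Sum>u\<in>S. lam u *\<^sub>R outer u u)"
    unfolding matrix_sum_right mult_outer using assms unfolding spec_def
    by (intro sum.cong) (auto simp: outer_scale)
  finally show ?thesis .
qed


lemma outer_density:
  assumes "cinner u u = 1"
  shows "density (outer u u)"
proof -
  have h: "hermitian (outer u u)"
    unfolding hermitian_def adj_def outer_def by (simp add: vec_eq_iff mult.commute)
  have "0 \<le> Re (\<Sum>i\<in>UNIV. cnj (v $ i) * (outer u u *v v) $ i)" for v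
  proof -
    have "(\<Sum>i\<in>UNIV. cnj (v $ i) * (outer u u *v v) $ i) = cinner v (outer u u *v v)"
      unfolding cinner_def ..
    also have "\<dots> = cinner u v * cnj (cinner u v)"
      by (simp add: outer_mult_vec cinner_scale_right cinner_cnj mult.commute)
    also have "\<dots> = of_real ((cmod (cinner u v))^2)" by (rule complex_norm_square[symmetric])
    finally show ?thesis by simp
  qed
  moreover have "mtrace (outer u u) = 1"
  proof -
    have "mtrace (outer u u) = cnj (cinner u u)"
      unfolding mtrace_def outer_def cinner_def by (simp add: mult.commute)
    then show ?thesis using assms by simp
  qed
  ultimately show ?thesis unfolding density_def psd_def using h by blast
qed

lemma spec_trace_rho:
  assumes sp: "spec Q S lam"
  shows "mtrace (\<rho> ** Q) = (\<Sum>u\<in>S. of_real (lam u) * cinner u (\<rho> *v u))"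
proof -
  have id: "(\<Sum>u\<in>S. outer u u) = mat 1" and e: "\<forall>u\<in>S. Q *v u = of_real (lam u) *s u"
    using sp unfolding spec_def by auto
  have "mtrace (\<rho> ** Q) = (\<Sum>u\<in>S. cinner u ((\<rho> ** Q) *v u))" by (rule trace_basis[OF id])
  also have "\<dots> = (\<Sum>u\<in>S. of_real (lam u) * cinner u (\<rho> *v u))"
    by (rule sum.cong) (use e in \<open>auto simp: matrix_vector_mul_assoc[symmetric] mv_scale cinner_scale_right\<close>)
  finally show ?thesis .
qed

lemma spec_trace:
  assumes sp: "spec Q S lam"
  shows "mtrace Q = (\<Sum>u\<in>S. of_real (lam u))"
    and "mtrace (Q ** Q) = (\<Sum>u\<in>S. of_real ((lam u)^2))"
proof -
  have on: "\<forall>u\<in>S. cinner u u = 1" using sp unfolding spec_def orthonormal_def by auto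
  have "mtrace (mat 1 ** Q) = (\<Sum>u\<in>S. of_real (lam u) * cinner u (mat 1 *v u))"
    by (rule spec_trace_rho[OF sp])
  then show "mtrace Q = (\<Sum>u\<in>S. of_real (lam u))" using on by simp
  have e: "\<forall>u\<in>S. Q *v u = of_real (lam u) *s u" using sp unfolding spec_def by auto
  have "mtrace (Q ** Q) = (\<Sum>u\<in>S. of_real (lam u) * cinner u (Q *v u))"
    by (rule spec_trace_rho[OF sp])
  also have "\<dots> = (\<Sum>u\<in>S. of_real ((lam u)^2))"
    by (rule sum.cong) (use e on in \<open>auto simp: cinner_scale_right power2_eq_square\<close>)
  finally show "mtrace (Q ** Q) = (\<Sum>u\<in>S. of_real ((lam u)^2))" .
qed

definition lmin :: "complex^'n^'n \<Rightarrow> real" where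
  "lmin Q = Inf {Re (mtrace (\<rho> ** Q)) | \<rho>. density \<rho>}"

lemma spec_lmin:
  fixes Q :: "complex^'n^'n"
  assumes sp: "spec Q S lam"
  shows "lmin Q = Min (lam ` S)"
    and "\<And>\<rho>. density \<rho> \<Longrightarrow> Min (lam ` S) \<le> Re (mtrace (\<rho> ** Q))"
    and "\<exists>u\<in>S. lam u = Min (lam ` S) \<and> density (outer u u) \<and> Re (mtrace (outer u u ** Q)) = Min (lam ` S)"
proof -
  have fin: "finite S" and cS: "card S = CARD('n)" using sp unfolding spec_def by auto
  have neS: "S \<noteq> {}" using cS by auto
  have on: "\<forall>u\<in>S. cinner u u = 1" using sp unfolding spec_def orthonormal_def by auto
  have id: "(\<Sum>u\<in>S. outer u u) = mat 1" using sp unfolding spec_def by auto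
  have e: "\<forall>u\<in>S. Q *v u = of_real (lam u) *s u" using sp unfolding spec_def by auto
  define m where "m = Min (lam ` S)"
  have mle: "\<And>u. u \<in> S \<Longrightarrow> m \<le> lam u" unfolding m_def using fin by simp
  show low: "m \<le> Re (mtrace (\<rho> ** Q))" if dr: "density \<rho>" for \<rho>
  proof -
    define r where "r u = Re (cinner u (\<rho> *v u))" for u
    have psdr: "psd \<rho>" and tr1: "mtrace \<rho> = 1" using dr unfolding density_def by auto
    have hr: "hermitian \<rho>" using psdr unfolding psd_def by auto
    have r0: "0 \<le> r u" for u unfolding r_def by (rule psd_form[OF psdr])
    have creal: "cinner u (\<rho> *v u) = of_real (r u)" for u
      unfolding r_def by (rule herm_form_real[OF hr])
    have "Re (mtrace (\<rho> ** Q)) = (\<Sum>u\<in>S. lam u * r u)"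
      unfolding spec_trace_rho[OF sp] by (simp add: creal)
    moreover have "(\<Sum>u\<in>S. r u) = 1"
    proof -
      have "mtrace \<rho> = (\<Sum>u\<in>S. cinner u (\<rho> *v u))" by (rule trace_basis[OF id])
      then have "(\<Sum>u\<in>S. complex_of_real (r u)) = 1" using tr1 by (simp add: creal)
      then show ?thesis by (metis of_real_sum of_real_eq_1_iff)
    qed
    moreover have "(\<Sum>u\<in>S. m * r u) \<le> (\<Sum>u\<in>S. lam u * r u)"
      by (rule sum_mono) (simp add: mle mult_right_mono r0)
    ultimately show ?thesis by (simp add: sum_distrib_left[symmetric])
  qed
  have "Min (lam ` S) \<in> lam ` S" using fin neS by simp
  then obtain u0 where u0: "u0 \<in> S" "lam u0 = m" unfolding m_def by auto
  have d0: "density (outer u0 u0)" using outer_density on u0 by blast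
  have t0: "Re (mtrace (outer u0 u0 ** Q)) = m"
    using u0 on e by (simp add: trace_outer_left cinner_scale_right)
  show "\<exists>u\<in>S. lam u = Min (lam ` S) \<and> density (outer u u) \<and> Re (mtrace (outer u u ** Q)) = Min (lam ` S)"
    using u0 d0 t0 unfolding m_def by blast
  show "lmin Q = Min (lam ` S)"
    unfolding lmin_def m_def[symmetric]
    by (rule cInf_eq_minimum) (use d0 t0 low in auto)
qed


lemma sq_sum_expand:
  fixes x :: "'a \<Rightarrow> real"
  assumes "finite S"
  shows "(\<Sum>u\<in>S. x u)^2 = (\<Sum>u\<in>S. (x u)^2) + (\<Sum>u\<in>S. \<Sum>v\<in>S-{u}. x u * x v)"
proof -
  have "(\<Sum>u\<in>S. x u)^2 = (\<Sum>u\<in>S. \<Sum>v\<in>S. x u * x v)"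
    by (simp add: power2_eq_square sum_product)
  also have "\<dots> = (\<Sum>u\<in>S. (x u)^2 + (\<Sum>v\<in>S-{u}. x u * x v))"
    by (rule sum.cong) (use assms in \<open>auto simp: sum.remove power2_eq_square\<close>)
  finally show ?thesis by (simp add: sum.distrib)
qed

lemma sqrt_facts:
  fixes d :: real
  assumes "d \<ge> 2"
  shows "(sqrt (d+1))^2 = d + 1" "sqrt (d + 1) > 1"
  using assms by auto

lemma lower_scalar:
  fixes lam :: "'a \<Rightarrow> real" and S :: "'a set"
  defines "d \<equiv> real (card S)"
  defines "s \<equiv> sqrt (d + 1)"
  defines "m \<equiv> Min (lam ` S)"
  assumes fin: "finite S" and d2: "card S \<ge> 2"
    and s1: "(\<Sum>u\<in>S. lam u) = 1" and s2: "(\<Sum>u\<in>S. (lam u)^2) = d"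
  shows "m \<le> (1 - s) / d"
    and "m = (1 - s) / d \<Longrightarrow> \<exists>u0\<in>S. lam u0 = m + s \<and> (\<forall>u\<in>S-{u0}. lam u = m)"
proof -
  have dge: "d \<ge> 2" unfolding d_def using d2 by simp
  have ss: "s^2 = d + 1" unfolding s_def using dge by simp
  have s0: "s > 0" unfolding s_def using dge by simp
  have ne: "S \<noteq> {}" using d2 by auto
  have mle: "\<And>u. u \<in> S \<Longrightarrow> m \<le> lam u" unfolding m_def using fin by simp
  define x where "x u = lam u - m" for u
  have x0: "\<And>u. u \<in> S \<Longrightarrow> 0 \<le> x u" unfolding x_def using mle by simp
  have sx: "(\<Sum>u\<in>S. x u) = 1 - d * m" unfolding x_def using s1 by (simp add: sum_subtractf d_def)
  have sx2: "(\<Sum>u\<in>S. (x u)^2) = d - 2 * m + d * m^2"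
    unfolding x_def using s1 s2 fin
    by (simp add: power2_diff sum.distrib sum_subtractf sum_distrib_left[symmetric] sum_distrib_right[symmetric] d_def)
  define C where "C = (\<Sum>u\<in>S. \<Sum>v\<in>S-{u}. x u * x v)"
  have C0: "0 \<le> C" unfolding C_def using x0 by (intro sum_nonneg) (auto intro: mult_nonneg_nonneg)
  have eqC: "(1 - d * m)^2 = d - 2 * m + d * m^2 + C"
    using sq_sum_expand[OF fin, of x] sx sx2 unfolding C_def by simp
  have dm1: "d * m \<le> 1"
  proof -
    have "(\<Sum>u\<in>S. m) \<le> (\<Sum>u\<in>S. lam u)" by (rule sum_mono) (rule mle)
    then show ?thesis using s1 by (simp add: d_def mult.commute)
  qed
  have key: "C = (d - 1) * (d * m^2 - 2 * m - 1)"
    using eqC by (simp add: power2_eq_square algebra_simps)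
  have dd: "d * (d * m^2 - 2 * m - 1) = (1 - d * m)^2 - s^2"
    using ss by (simp add: power2_eq_square algebra_simps)
  have qn: "0 \<le> d * m^2 - 2 * m - 1"
  proof -
    have "d * m^2 - 2 * m - 1 = C / (d - 1)" using key dge by simp
    then show ?thesis using C0 dge by simp
  qed
  have "0 \<le> d * (d * m^2 - 2 * m - 1)" using qn dge by simp
  then have "s^2 \<le> (1 - d * m)^2" using dd by linarith
  then have sle: "s \<le> 1 - d * m" by (rule power2_le_imp_le) (use dm1 in simp)
  then show "m \<le> (1 - s) / d" using dge by (simp add: field_simps)
  assume meq: "m = (1 - s) / d"
  then have dmeq: "d * m = 1 - s" using dge by (simp add: field_simps)
  have "d * (d * m^2 - 2 * m - 1) = 0" using dd dmeq by simp
  then have "d * m^2 - 2 * m - 1 = 0" using dge by simp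
  then have C00: "C = 0" using key by simp
  have cross: "x u * x v = 0" if "u \<in> S" "v \<in> S" "u \<noteq> v" for u v
  proof -
    have inner0: "\<forall>u\<in>S. (\<Sum>v\<in>S-{u}. x u * x v) = 0"
      using C00 unfolding C_def
      by (subst (asm) sum_nonneg_eq_0_iff) (use fin x0 in \<open>auto intro!: sum_nonneg mult_nonneg_nonneg\<close>)
    then have "(\<Sum>v\<in>S-{u}. x u * x v) = 0" using that by blast
    then have "\<forall>v\<in>S-{u}. x u * x v = 0"
      by (subst (asm) sum_nonneg_eq_0_iff) (use fin x0 that in \<open>auto intro!: mult_nonneg_nonneg\<close>)
    then show ?thesis using that by blast
  qed
  have "(\<Sum>u\<in>S. x u) = s" using sx dmeq by simp
  then obtain u0 where u0: "u0 \<in> S" "x u0 \<noteq> 0"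
    using s0 by (metis (mono_tags, lifting) sum.neutral less_irrefl)
  have oth: "\<forall>u\<in>S-{u0}. x u = 0" using cross u0 by auto
  have "(\<Sum>u\<in>S. x u) = x u0 + (\<Sum>u\<in>S-{u0}. x u)" using fin u0 by (simp add: sum.remove)
  then have "x u0 = s" using oth \<open>(\<Sum>u\<in>S. x u) = s\<close> by simp
  then show "\<exists>u0\<in>S. lam u0 = m + s \<and> (\<forall>u\<in>S-{u0}. lam u = m)"
    using u0 oth unfolding x_def by auto
qed


lemma upper_scalar:
  fixes lam :: "'a \<Rightarrow> real" and S :: "'a set"
  defines "d \<equiv> real (card S)"
  defines "s \<equiv> sqrt (d + 1)"
  defines "m \<equiv> Min (lam ` S)"
  assumes fin: "finite S" and d2: "card S \<ge> 2"
    and s1: "(\<Sum>u\<in>S. lam u) = 1" and s2: "(\<Sum>u\<in>S. (lam u)^2) = d"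
  shows "(1 - (d - 1) * s) / d \<le> m"
    and "m = (1 - (d - 1) * s) / d \<Longrightarrow> \<exists>u0\<in>S. lam u0 = m \<and> (\<forall>u\<in>S-{u0}. lam u = (1 + s) / d)"
proof -
  have dge: "d \<ge> 2" unfolding d_def using d2 by simp
  have ss: "s^2 = d + 1" unfolding s_def using dge by simp
  have s0: "s > 0" unfolding s_def using dge by simp
  have ne: "S \<noteq> {}" using d2 by auto
  have "Min (lam ` S) \<in> lam ` S" using fin ne by simp
  then obtain u0 where u0: "u0 \<in> S" "lam u0 = m" unfolding m_def by auto
  define S' where "S' = S - {u0}"
  have finS': "finite S'" unfolding S'_def using fin by simp
  have cS': "real (card S') = d - 1" unfolding S'_def d_def using u0 fin d2 by (simp add: of_nat_diff)
  have t1: "(\<Sum>u\<in>S'. lam u) = 1 - m" unfolding S'_def using s1 u0 sum.remove[OF fin u0(1), of lam] by simp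
  have t2: "(\<Sum>u\<in>S'. (lam u)^2) = d - m^2" unfolding S'_def using s2 u0 sum.remove[OF fin u0(1), of "\<lambda>u. (lam u)^2"] by simp
  define b where "b = (1 - m) / (d - 1)"
  define E where "E = (d - 1) * (d - m^2) - (1 - m)^2"
  have sumsq: "(\<Sum>u\<in>S'. (lam u - b)^2) = E / (d - 1)"
  proof -
    have "(\<Sum>u\<in>S'. (lam u - b)^2) = (\<Sum>u\<in>S'. (lam u)^2) - 2 * b * (\<Sum>u\<in>S'. lam u) + (d - 1) * b^2"
      by (simp add: power2_diff sum.distrib sum_subtractf sum_distrib_left[symmetric] sum_distrib_right[symmetric] cS' algebra_simps)
    also have "\<dots> = E / (d - 1)"
    proof -
      have nz: "d - 1 \<noteq> 0" "d \<noteq> 1" using dge by simp_all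
      show ?thesis unfolding t1 t2 b_def E_def
        by (simp add: divide_simps nz power2_eq_square)
    qed
    finally show ?thesis .
  qed
  have E0: "0 \<le> E"
  proof -
    have "0 \<le> (\<Sum>u\<in>S'. (lam u - b)^2)" by (simp add: sum_nonneg)
    then show ?thesis using sumsq dge by (simp add: zero_le_divide_iff)
  qed
  have dE: "d * E = ((d - 1) * s)^2 - (d * m - 1)^2"
    unfolding E_def using ss by (simp add: power2_eq_square algebra_simps)
  have "0 \<le> d * E" using E0 dge by simp
  then have "(d * m - 1)^2 \<le> ((d - 1) * s)^2" using dE by linarith
  moreover have "0 \<le> (d - 1) * s" using s0 dge by simp
  ultimately have "\<bar>d * m - 1\<bar> \<le> (d - 1) * s"
    using abs_le_square_iff[of "d * m - 1" "(d - 1) * s"] by simp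
  then have "1 - (d - 1) * s \<le> d * m" by linarith
  then show "(1 - (d - 1) * s) / d \<le> m" using dge by (simp add: field_simps)
  assume meq: "m = (1 - (d - 1) * s) / d"
  then have dmeq: "d * m - 1 = - ((d - 1) * s)" using dge by (simp add: field_simps)
  then have "d * E = 0" using dE by (simp add: power2_eq_square)
  then have "E = 0" using dge by simp
  then have "(\<Sum>u\<in>S'. (lam u - b)^2) = 0" using sumsq by simp
  then have eqb: "\<forall>u\<in>S'. lam u = b" using finS' by (subst (asm) sum_nonneg_eq_0_iff) auto
  have "b = (1 + s) / d"
  proof -
    have "1 - m = (d - 1) * (1 + s) / d" using meq dge by (simp add: field_simps)
    then have "b = ((d - 1) * (1 + s) / d) / (d - 1)" unfolding b_def by simp
    then show ?thesis using dge by simp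
  qed
  then show "\<exists>u0\<in>S. lam u0 = m \<and> (\<forall>u\<in>S-{u0}. lam u = (1 + s) / d)"
    using u0 eqb unfolding S'_def by auto
qed


lemma mm_add_left: "(A + B) ** C = A ** C + B ** (C::complex^'n^'n)"
  by (simp add: vec_eq_iff matrix_matrix_mult_def distrib_right sum.distrib)
lemma mm_scaleR_left: "(c *\<^sub>R A) ** B = c *\<^sub>R (A ** (B::complex^'n^'n))"
  unfolding vec_eq_iff matrix_matrix_mult_def vector_scaleR_component vec_lambda_beta
  by (simp add: scaleR_conv_of_real sum_distrib_left mult_ac)
lemma mm_scaleR_right: "A ** (c *\<^sub>R B) = c *\<^sub>R (A ** (B::complex^'n^'n))"
  unfolding vec_eq_iff matrix_matrix_mult_def vector_scaleR_component vec_lambda_beta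
  by (simp add: scaleR_conv_of_real sum_distrib_left mult_ac)
lemma mtrace_add: "mtrace (A + B) = mtrace A + mtrace B"
  unfolding mtrace_def by (simp add: sum.distrib)
lemma mtrace_scaleR: "mtrace (c *\<^sub>R A) = of_real c * mtrace A"
  unfolding mtrace_def vector_scaleR_component by (simp add: scaleR_conv_of_real sum_distrib_left)
lemma mtrace_mat1: "mtrace (mat 1 :: complex^'n^'n) = of_nat CARD('n)"
  unfolding mtrace_def mat_def by simp

lemma overlap_gen:
  fixes X Y :: "complex^'n^'n"
  shows "mtrace ((a *\<^sub>R X + b *\<^sub>R mat 1) ** (a *\<^sub>R Y + b *\<^sub>R mat 1)) =
    of_real (a^2) * mtrace (X ** Y) + of_real (a * b) * (mtrace X + mtrace Y) + of_real (b^2 * real CARD('n))"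
  by (simp add: mm_add_left matrix_add_ldistrib mm_scaleR_left mm_scaleR_right mtrace_add mtrace_scaleR
      mtrace_mat1 power2_eq_square algebra_simps)

lemma trace_affine:
  fixes \<rho> X :: "complex^'n^'n"
  shows "mtrace (\<rho> ** (a *\<^sub>R X + b *\<^sub>R mat 1)) = of_real a * mtrace (\<rho> ** X) + of_real b * mtrace \<rho>"
  by (simp add: matrix_add_ldistrib mm_scaleR_right mtrace_add mtrace_scaleR)

lemma cinner_one_norm: "cinner (\<psi>::complex^'n) \<psi> = 1 \<longleftrightarrow> norm \<psi> = 1"
proof -
  have "cinner \<psi> \<psi> = 1 \<longleftrightarrow> (norm \<psi>)^2 = 1"
    unfolding cinner_self by (metis of_real_eq_1_iff)
  also have "\<dots> \<longleftrightarrow> norm \<psi> = 1"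
    using norm_ge_zero[of \<psi>] by (metis abs_of_nonneg power2_eq_1_iff one_power2 abs_neg_one abs_one)
  finally show ?thesis .
qed

lemma lmin_props:
  fixes Q :: "complex^'n^'n"
  assumes "hermitian Q"
  shows "\<And>\<rho>. density \<rho> \<Longrightarrow> lmin Q \<le> Re (mtrace (\<rho> ** Q))"
    and "\<exists>\<rho>. density \<rho> \<and> Re (mtrace (\<rho> ** Q)) = lmin Q"
proof -
  obtain S lam where sp: "spec Q S lam" using spectral[OF assms] by blast
  show "\<And>\<rho>. density \<rho> \<Longrightarrow> lmin Q \<le> Re (mtrace (\<rho> ** Q))"
    using spec_lmin(1,2)[OF sp] by simp
  show "\<exists>\<rho>. density \<rho> \<and> Re (mtrace (\<rho> ** Q)) = lmin Q"
    using spec_lmin(1,3)[OF sp] by metis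
qed

lemma sum_outer_remove:
  assumes "finite S" "u0 \<in> S" "(\<Sum>u\<in>S. outer u u) = mat 1"
  shows "(\<Sum>u\<in>S-{u0}. outer u u) = mat 1 - outer u0 u0"
  using sum.remove[OF assms(1,2), of "\<lambda>u. outer u u"] assms(3) by simp

lemma per_j:
  fixes Q :: "complex^'n^'n"
  defines "d \<equiv> real CARD('n)"
  defines "s \<equiv> sqrt (d + 1)"
  assumes herm: "hermitian Q" and tr1: "mtrace Q = 1" and tr2: "mtrace (Q ** Q) = of_nat CARD('n)"
    and d2: "CARD('n) \<ge> 2"
  shows "(1 - (d - 1) * s) / d \<le> lmin Q" and "lmin Q \<le> (1 - s) / d"
    and "lmin Q = (1 - s) / d \<Longrightarrow> \<exists>\<psi>. cinner \<psi> \<psi> = 1 \<and> Q = s *\<^sub>R outer \<psi> \<psi> + ((1 - s) / d) *\<^sub>R mat 1"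
    and "lmin Q = (1 - (d - 1) * s) / d \<Longrightarrow> \<exists>\<psi>. cinner \<psi> \<psi> = 1 \<and> Q = (- s) *\<^sub>R outer \<psi> \<psi> + ((1 + s) / d) *\<^sub>R mat 1"
proof -
  obtain S lam where sp: "spec Q S lam" using spectral[OF herm] by blast
  have fin: "finite S" and cS: "card S = CARD('n)" and on: "orthonormal S"
    and id: "(\<Sum>u\<in>S. outer u u) = mat 1"
    using sp unfolding spec_def by auto
  have lm: "lmin Q = Min (lam ` S)" by (rule spec_lmin(1)[OF sp])
  have s1: "(\<Sum>u\<in>S. lam u) = 1"
    using spec_trace(1)[OF sp] tr1 by (metis of_real_sum of_real_eq_1_iff)
  have s2: "(\<Sum>u\<in>S. (lam u)^2) = d"
  proof -
    have "of_real (\<Sum>u\<in>S. (lam u)^2) = (of_real d :: complex)"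
      using spec_trace(2)[OF sp] tr2 unfolding d_def by (simp add: of_real_sum)
    then show ?thesis using of_real_eq_iff by blast
  qed
  have dS: "d = real (card S)" unfolding d_def cS ..
  have d2': "card S \<ge> 2" using cS d2 by simp
  have s2': "(\<Sum>u\<in>S. (lam u)^2) = real (card S)" using s2 dS by simp
  note L0 = lower_scalar[OF fin d2' s1 s2']
  note U0 = upper_scalar[OF fin d2' s1 s2']
  have L1: "lmin Q \<le> (1 - s) / d" using L0(1) unfolding lm s_def dS .
  have L2: "\<exists>u0\<in>S. lam u0 = lmin Q + s \<and> (\<forall>u\<in>S-{u0}. lam u = lmin Q)" if "lmin Q = (1 - s) / d"
    using L0(2) that unfolding lm s_def dS by blast
  have U1: "(1 - (d - 1) * s) / d \<le> lmin Q" using U0(1) unfolding lm s_def dS .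
  have U2: "\<exists>u0\<in>S. lam u0 = lmin Q \<and> (\<forall>u\<in>S-{u0}. lam u = (1 + s) / d)" if "lmin Q = (1 - (d - 1) * s) / d"
    using U0(2) that unfolding lm s_def dS by blast
  show "(1 - (d - 1) * s) / d \<le> lmin Q" by (rule U1)
  show "lmin Q \<le> (1 - s) / d" by (rule L1)
  have expand: "Q = (\<Sum>u\<in>S. lam u *\<^sub>R outer u u)" by (rule spec_expand[OF sp])
  have onu: "\<And>u. u \<in> S \<Longrightarrow> cinner u u = 1" using on unfolding orthonormal_def by auto
  have split: "Q = lam u0 *\<^sub>R outer u0 u0 + c *\<^sub>R (mat 1 - outer u0 u0)"
    if u0: "u0 \<in> S" and oth: "\<forall>u\<in>S-{u0}. lam u = c" for u0 c
  proof -
    have "Q = lam u0 *\<^sub>R outer u0 u0 + (\<Sum>u\<in>S-{u0}. lam u *\<^sub>R outer u u)"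
      using expand sum.remove[OF fin u0, of "\<lambda>u. lam u *\<^sub>R outer u u"] by simp
    also have "(\<Sum>u\<in>S-{u0}. lam u *\<^sub>R outer u u) = (\<Sum>u\<in>S-{u0}. c *\<^sub>R outer u u)"
      by (rule sum.cong) (use oth in auto)
    also have "\<dots> = c *\<^sub>R (mat 1 - outer u0 u0)"
      by (simp add: scaleR_sum_right[symmetric] sum_outer_remove[OF fin u0 id])
    finally show ?thesis .
  qed
  show "\<exists>\<psi>. cinner \<psi> \<psi> = 1 \<and> Q = s *\<^sub>R outer \<psi> \<psi> + ((1 - s) / d) *\<^sub>R mat 1"
    if meq: "lmin Q = (1 - s) / d"
  proof -
    obtain u0 where u0: "u0 \<in> S" "lam u0 = lmin Q + s" "\<forall>u\<in>S-{u0}. lam u = lmin Q"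
      using L2[OF meq] by blast
    have "Q = lam u0 *\<^sub>R outer u0 u0 + lmin Q *\<^sub>R (mat 1 - outer u0 u0)" by (rule split[OF u0(1) u0(3)])
    also have "\<dots> = s *\<^sub>R outer u0 u0 + ((1 - s) / d) *\<^sub>R mat 1"
      using u0(2) meq by (simp add: algebra_simps)
    finally show ?thesis using onu[OF u0(1)] by blast
  qed
  show "\<exists>\<psi>. cinner \<psi> \<psi> = 1 \<and> Q = (- s) *\<^sub>R outer \<psi> \<psi> + ((1 + s) / d) *\<^sub>R mat 1"
    if meq: "lmin Q = (1 - (d - 1) * s) / d"
  proof -
    obtain u0 where u0: "u0 \<in> S" "lam u0 = lmin Q" "\<forall>u\<in>S-{u0}. lam u = (1 + s) / d"
      using U2[OF meq] by blast
    have dpos: "d > 0" unfolding d_def by simp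
    have "Q = lam u0 *\<^sub>R outer u0 u0 + ((1 + s) / d) *\<^sub>R (mat 1 - outer u0 u0)" by (rule split[OF u0(1) u0(3)])
    also have "\<dots> = (lam u0 - (1 + s) / d) *\<^sub>R outer u0 u0 + ((1 + s) / d) *\<^sub>R mat 1"
      by (simp add: algebra_simps)
    also have "lam u0 - (1 + s) / d = - s"
      using u0(2) meq dpos by (simp add: field_simps)
    finally show ?thesis using onu[OF u0(1)] by blast
  qed
qed


lemma idx_props: "finite (idx TYPE('n::finite))" "(1::nat) \<in> idx TYPE('n::finite)"
proof -
  have "0 < CARD('n)" by simp
  then have "1 \<le> CARD('n)^2" by (simp add: Suc_le_eq)
  then show "finite (idx TYPE('n))" "(1::nat) \<in> idx TYPE('n)" unfolding idx_def by auto
qed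

lemma negativity_eq:
  fixes Q :: "nat \<Rightarrow> complex^'n^'n"
  assumes herm: "\<forall>j\<in>idx TYPE('n). hermitian (Q j)" and neg: "\<forall>j\<in>idx TYPE('n). lmin (Q j) < 0"
  shows "negativity Q = Max ((\<lambda>j. - lmin (Q j)) ` idx TYPE('n))"
proof -
  let ?I = "idx TYPE('n)"
  define V where "V = Max ((\<lambda>j. - lmin (Q j)) ` ?I)"
  have finI: "finite ?I" and oneI: "1 \<in> ?I" by (rule idx_props)+
  have neI: "?I \<noteq> {}" using oneI by blast
  have Vge: "\<And>j. j \<in> ?I \<Longrightarrow> - lmin (Q j) \<le> V" unfolding V_def using finI by simp
  have V0: "0 \<le> V" using Vge[OF oneI] neg oneI by force
  have bound: "neg_state Q \<rho> \<le> V" if dr: "density \<rho>" for \<rho>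
  proof -
    have "- V \<le> (MIN j\<in>?I. Re (mtrace (\<rho> ** Q j)))"
    proof (subst Min_ge_iff)
      show "finite ((\<lambda>j. Re (mtrace (\<rho> ** Q j))) ` ?I)" using finI by simp
      show "(\<lambda>j. Re (mtrace (\<rho> ** Q j))) ` ?I \<noteq> {}" using neI by simp
      show "\<forall>a\<in>(\<lambda>j. Re (mtrace (\<rho> ** Q j))) ` ?I. - V \<le> a"
      proof
        fix a assume "a \<in> (\<lambda>j. Re (mtrace (\<rho> ** Q j))) ` ?I"
        then obtain j where j: "j \<in> ?I" "a = Re (mtrace (\<rho> ** Q j))" by blast
        have "lmin (Q j) \<le> a" using lmin_props(1)[of "Q j" \<rho>] herm j dr by simp
        then show "- V \<le> a" using Vge[OF j(1)] by simp
      qed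
    qed
    then show ?thesis unfolding neg_state_def using V0 by simp
  qed
  have "V \<in> (\<lambda>j. - lmin (Q j)) ` ?I" unfolding V_def using finI neI by simp
  then obtain j0 where j0: "j0 \<in> ?I" "- lmin (Q j0) = V" by auto
  obtain \<rho>0 where r0: "density \<rho>0" "Re (mtrace (\<rho>0 ** Q j0)) = lmin (Q j0)"
    using lmin_props(2)[of "Q j0"] herm j0 by blast
  have "(MIN j\<in>?I. Re (mtrace (\<rho>0 ** Q j))) \<le> Re (mtrace (\<rho>0 ** Q j0))"
    using finI j0 by simp
  then have "V \<le> neg_state Q \<rho>0" unfolding neg_state_def using r0 j0 by simp
  then have att: "neg_state Q \<rho>0 = V" using bound[OF r0(1)] by simp
  have "negativity Q = V" unfolding negativity_def
    by (rule cSup_eq_maximum) (use att r0 bound in auto)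
  then show ?thesis unfolding V_def .
qed


lemma adj_mult: "adj (A ** B) = adj B ** adj (A::complex^'n^'n)"
  unfolding adj_def matrix_matrix_mult_def by (simp add: vec_eq_iff mult.commute)
lemma adj_adj: "adj (adj A) = (A::complex^'n^'n)"
  unfolding adj_def by (simp add: vec_eq_iff)

lemma conj_density:
  fixes U \<rho> :: "complex^'n^'n"
  assumes u: "unitary U" and dr: "density \<rho>"
  shows "density (U ** \<rho> ** adj U)"
proof -
  have psdr: "psd \<rho>" and tr1: "mtrace \<rho> = 1" and hr: "hermitian \<rho>"
    using dr unfolding density_def psd_def by auto
  have uu: "adj U ** U = mat 1" using u unfolding unitary_def by auto
  have h: "hermitian (U ** \<rho> ** adj U)"
    using hr unfolding hermitian_def by (simp add: adj_mult adj_adj matrix_mul_assoc)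
  have f: "0 \<le> Re (cinner v ((U ** \<rho> ** adj U) *v v))" for v
  proof -
    have "cinner v ((U ** \<rho> ** adj U) *v v) = cinner v (U *v (\<rho> *v (adj U *v v)))"
      by (simp add: matrix_vector_mul_assoc matrix_mul_assoc)
    also have "\<dots> = cinner (adj U *v v) (\<rho> *v (adj U *v v))" by (rule cinner_adj)
    finally show ?thesis using psd_form[OF psdr] by simp
  qed
  have t: "mtrace (U ** \<rho> ** adj U) = 1"
  proof -
    have "mtrace (U ** \<rho> ** adj U) = mtrace (adj U ** (U ** \<rho>))" by (rule trace_comm)
    also have "\<dots> = mtrace \<rho>" by (simp add: matrix_mul_assoc uu)
    finally show ?thesis using tr1 by simp
  qed
  show ?thesis unfolding density_def psd_def using h f t unfolding cinner_def by blast
qed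

lemma conj_trace:
  fixes U \<rho> Q :: "complex^'n^'n"
  assumes u: "unitary U"
  shows "mtrace ((U ** \<rho> ** adj U) ** (U ** Q ** adj U)) = mtrace (\<rho> ** Q)"
proof -
  have uu: "adj U ** U = mat 1" using u unfolding unitary_def by auto
  have "(U ** \<rho> ** adj U) ** (U ** Q ** adj U) = U ** \<rho> ** (adj U ** U) ** Q ** adj U"
    by (simp only: matrix_mul_assoc)
  also have "\<dots> = U ** \<rho> ** Q ** adj U" by (simp only: uu matrix_mul_rid)
  finally have e: "(U ** \<rho> ** adj U) ** (U ** Q ** adj U) = U ** \<rho> ** Q ** adj U" .
  have "mtrace (U ** \<rho> ** Q ** adj U) = mtrace (adj U ** (U ** \<rho> ** Q))"
    by (rule trace_comm)
  also have "adj U ** (U ** \<rho> ** Q) = (adj U ** U) ** \<rho> ** Q" by (simp only: matrix_mul_assoc)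
  also have "\<dots> = \<rho> ** Q" by (simp only: uu matrix_mul_lid)
  finally show ?thesis using e by simp
qed

lemma rank_one_outer: "rank_one_projector P \<Longrightarrow> \<exists>\<psi>. cinner \<psi> \<psi> = 1 \<and> P = outer \<psi> \<psi>"
proof -
  assume "rank_one_projector P"
  then obtain \<psi> :: "complex^'a" where "norm \<psi> = 1" "P = (\<chi> i j. \<psi> $ i * cnj (\<psi> $ j))"
    unfolding rank_one_projector_def by blast
  then have "cinner \<psi> \<psi> = 1" "P = outer \<psi> \<psi>" unfolding outer_def using cinner_one_norm by blast+
  then show ?thesis by blast
qed

lemma outer_rank_one: "cinner \<psi> \<psi> = 1 \<Longrightarrow> rank_one_projector (outer \<psi> \<psi>)"
proof -
  assume "cinner \<psi> \<psi> = 1"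
  then have "norm \<psi> = 1" using cinner_one_norm by blast
  then show ?thesis unfolding rank_one_projector_def outer_def by blast
qed

lemma sic_alg:
  fixes a b c d :: real and \<delta> :: real
  assumes "a^2 * (d + 1) = 1" "a * b * (d + 1) = - c" "b^2 * (d + 1) = c^2" "c^2 * d - 2 * c = 1" "d > 0"
  shows "a^2 * (d * \<delta>) + a * b * 2 + b^2 * d = (d * \<delta> + 1) / (d + 1)"
proof -
  have "(a^2 * (d * \<delta>) + a * b * 2 + b^2 * d) * (d + 1) = d * \<delta> + 1"
  proof -
    have "(a^2 * (d * \<delta>) + a * b * 2 + b^2 * d) * (d + 1) =
        (a^2 * (d + 1)) * (d * \<delta>) + (a * b * (d + 1)) * 2 + (b^2 * (d + 1)) * d"
      by (simp add: algebra_simps)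
    also have "\<dots> = d * \<delta> - 2 * c + c^2 * d" using assms by simp
    also have "\<dots> = d * \<delta> + 1" using assms(4) by simp
    finally show ?thesis .
  qed
  then show ?thesis using assms(5) by (simp add: field_simps)
qed

lemma sic_from_affine:
  fixes Q P :: "nat \<Rightarrow> complex^'n^'n" and a b c :: real
  assumes nq: "nqpr Q"
    and r1: "\<forall>j\<in>idx TYPE('n). \<exists>\<psi>. cinner \<psi> \<psi> = 1 \<and> P j = outer \<psi> \<psi>"
    and af: "\<forall>j\<in>idx TYPE('n). P j = a *\<^sub>R Q j + b *\<^sub>R mat 1"
    and h1: "a^2 * (real CARD('n) + 1) = 1" and h2: "a * b * (real CARD('n) + 1) = - c"
    and h3: "b^2 * (real CARD('n) + 1) = c^2" and h4: "c^2 * real CARD('n) - 2 * c = 1"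
  shows "sic P"
proof -
  have t1: "\<And>j. j \<in> idx TYPE('n) \<Longrightarrow> mtrace (Q j) = 1"
    and t2: "\<And>j k. j \<in> idx TYPE('n) \<Longrightarrow> k \<in> idx TYPE('n) \<Longrightarrow>
       mtrace (Q j ** Q k) = (if j = k then of_nat CARD('n) else 0)"
    using nq unfolding nqpr_def by auto
  have "mtrace (P j ** P k) =
      of_real ((real CARD('n) * (if j = k then 1 else 0) + 1) / (real CARD('n) + 1))"
    if j: "j \<in> idx TYPE('n)" and k: "k \<in> idx TYPE('n)" for j k
  proof -
    define \<delta> :: real where "\<delta> = (if j = k then 1 else 0)"
    have Pj: "P j = a *\<^sub>R Q j + b *\<^sub>R mat 1" using af j by blast
    have Pk: "P k = a *\<^sub>R Q k + b *\<^sub>R mat 1" using af k by blast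
    have "mtrace (P j ** P k) = of_real (a^2) * mtrace (Q j ** Q k) + of_real (a * b) * (mtrace (Q j) + mtrace (Q k))
        + of_real (b^2 * real CARD('n))"
      unfolding Pj Pk by (rule overlap_gen)
    also have "mtrace (Q j ** Q k) = of_real (real CARD('n) * \<delta>)"
      using t2[OF j k] unfolding \<delta>_def by simp
    also have "mtrace (Q j) + mtrace (Q k) = of_real 2"
      using t1[OF j] t1[OF k] by simp
    also have "of_real (a^2) * of_real (real CARD('n) * \<delta>) + of_real (a * b) * of_real 2
        + of_real (b^2 * real CARD('n)) =
        (of_real (a^2 * (real CARD('n) * \<delta>) + a * b * 2 + b^2 * real CARD('n)) :: complex)"
      by (simp only: of_real_mult of_real_add)
    also have "a^2 * (real CARD('n) * \<delta>) + a * b * 2 + b^2 * real CARD('n) = (real CARD('n) * \<delta> + 1) / (real CARD('n) + 1)"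
      by (rule sic_alg[OF h1 h2 h3 h4]) simp
    finally show ?thesis unfolding \<delta>_def .
  qed
  moreover have "\<forall>j\<in>idx TYPE('n). rank_one_projector (P j)"
  proof
    fix j assume "j \<in> idx TYPE('n)"
    then obtain \<psi> where "cinner \<psi> \<psi> = 1" "P j = outer \<psi> \<psi>" using r1 by blast
    then show "rank_one_projector (P j)" using outer_rank_one by simp
  qed
  ultimately show ?thesis unfolding sic_def by (intro conjI) auto
qed


theorem theorem1:
  fixes Q :: "nat \<Rightarrow> complex^'n^'n"
  assumes "CARD('n) \<ge> 2"
    and "nqpr Q"
  shows "(sqrt (real CARD('n) + 1) - 1) / real CARD('n) \<le> negativity Q
    \<and> negativity Q \<le> ((real CARD('n) - 1) * sqrt (real CARD('n) + 1) - 1) / real CARD('n)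
    \<and> (negativity Q = (sqrt (real CARD('n) + 1) - 1) / real CARD('n) \<longleftrightarrow>
         (\<exists>P. sic P \<and> (\<forall>j\<in>idx TYPE('n). Q j = Qminus P j)))
    \<and> (group_covariant Q \<longrightarrow>
         (negativity Q = ((real CARD('n) - 1) * sqrt (real CARD('n) + 1) - 1) / real CARD('n) \<longleftrightarrow>
         (\<exists>P. sic P \<and> (\<forall>j\<in>idx TYPE('n). Q j = Qplus P j))))"
proof -
  note d2 = assms(1) and nq = assms(2)
  define d where "d = real CARD('n)"
  define s where "s = sqrt (d + 1)"
  let ?I = "idx TYPE('n)"
  have dge: "d \<ge> 2" unfolding d_def using d2 by simp
  have dpos: "d > 0" using dge by simp
  have ss: "s^2 = d + 1" unfolding s_def using dge by simp
  have s1: "s > 1" unfolding s_def using dge by simp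
  have herm: "\<And>j. j \<in> ?I \<Longrightarrow> hermitian (Q j)"
    and t1: "\<And>j. j \<in> ?I \<Longrightarrow> mtrace (Q j) = 1"
    using nq unfolding nqpr_def by auto
  have t2: "\<And>j. j \<in> ?I \<Longrightarrow> mtrace (Q j ** Q j) = of_nat CARD('n)"
    using nq unfolding nqpr_def by auto
  define \<mu> where "\<mu> j = lmin (Q j)" for j
  have lo: "\<And>j. j \<in> ?I \<Longrightarrow> (1 - (d - 1) * s) / d \<le> \<mu> j"
    unfolding \<mu>_def d_def s_def using per_j(1)[OF herm t1 t2 d2] by blast
  have up: "\<And>j. j \<in> ?I \<Longrightarrow> \<mu> j \<le> (1 - s) / d"
    unfolding \<mu>_def d_def s_def using per_j(2)[OF herm t1 t2 d2] by blast
  have eqm: "\<And>j. j \<in> ?I \<Longrightarrow> \<mu> j = (1 - s) / d \<Longrightarrow>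
      \<exists>\<psi>. cinner \<psi> \<psi> = 1 \<and> Q j = s *\<^sub>R outer \<psi> \<psi> + ((1 - s) / d) *\<^sub>R mat 1"
    unfolding \<mu>_def d_def s_def using per_j(3)[OF herm t1 t2 d2] by blast
  have eqp: "\<And>j. j \<in> ?I \<Longrightarrow> \<mu> j = (1 - (d - 1) * s) / d \<Longrightarrow>
      \<exists>\<psi>. cinner \<psi> \<psi> = 1 \<and> Q j = (- s) *\<^sub>R outer \<psi> \<psi> + ((1 + s) / d) *\<^sub>R mat 1"
    unfolding \<mu>_def d_def s_def using per_j(4)[OF herm t1 t2 d2] by blast
  have negm: "(1 - s) / d < 0" using s1 dpos by (simp add: divide_neg_pos)
  have neg: "\<forall>j\<in>?I. lmin (Q j) < 0" using up negm unfolding \<mu>_def by force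
  define V where "V = Max ((\<lambda>j. - \<mu> j) ` ?I)"
  have NV: "negativity Q = V" unfolding V_def \<mu>_def
    by (rule negativity_eq) (use herm neg in auto)
  have finI: "finite ?I" and oneI: "1 \<in> ?I" by (rule idx_props)+
  have neI: "?I \<noteq> {}" using oneI by blast
  have Vge: "\<And>j. j \<in> ?I \<Longrightarrow> - \<mu> j \<le> V" unfolding V_def using finI by simp
  have Vle: "V \<le> x" if "\<And>j. j \<in> ?I \<Longrightarrow> - \<mu> j \<le> x" for x
    unfolding V_def using finI neI that by simp
  have "V \<in> (\<lambda>j. - \<mu> j) ` ?I" unfolding V_def using finI neI by simp
  then obtain j0 where j0: "j0 \<in> ?I" "V = - \<mu> j0" by auto
  define Nm where "Nm = (s - 1) / d"
  define Np where "Np = ((d - 1) * s - 1) / d"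
  have Nm_eq: "(1 - s) / d = - Nm" unfolding Nm_def by (simp add: minus_divide_left)
  have Np_eq: "(1 - (d - 1) * s) / d = - Np" unfolding Np_def by (simp add: minus_divide_left)
  have P1: "Nm \<le> V" using Vge[OF oneI] up[OF oneI] Nm_eq by simp
  have P2: "V \<le> Np" by (rule Vle) (use lo Np_eq in force)
  have cm: "((1 - s) / d)^2 * d - 2 * ((1 - s) / d) = 1"
    using ss dpos by (simp add: field_simps power2_eq_square)
  have cp: "((1 + s) / d)^2 * d - 2 * ((1 + s) / d) = 1"
    using ss dpos by (simp add: field_simps power2_eq_square)
  have s0: "s \<noteq> 0" using s1 by simp
  have Lfw: "\<exists>P. sic P \<and> (\<forall>j\<in>?I. Q j = Qminus P j)" if VN: "V = Nm"
  proof -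
    define c where "c = (1 - s) / d"
    define P where "P j = (1 / s) *\<^sub>R Q j + (- c / s) *\<^sub>R mat 1" for j
    have mu_eq: "\<mu> j = c" if j: "j \<in> ?I" for j
      using Vge[OF j] up[OF j] VN Nm_eq unfolding c_def by simp
    have r1: "\<forall>j\<in>?I. \<exists>\<psi>. cinner \<psi> \<psi> = 1 \<and> P j = outer \<psi> \<psi>"
    proof
      fix j assume j: "j \<in> ?I"
      obtain \<psi> where \<psi>: "cinner \<psi> \<psi> = 1" "Q j = s *\<^sub>R outer \<psi> \<psi> + c *\<^sub>R mat 1"
        using eqm[OF j mu_eq[OF j, unfolded c_def]] unfolding c_def by blast
      have "P j = outer \<psi> \<psi>" unfolding P_def \<psi>(2) using s0
        by (simp add: algebra_simps)
      then show "\<exists>\<psi>. cinner \<psi> \<psi> = 1 \<and> P j = outer \<psi> \<psi>" using \<psi>(1) by blast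
    qed
    have "sic P"
    proof (rule sic_from_affine[OF nq r1, of "1 / s" "- c / s" c])
      show "\<forall>j\<in>?I. P j = (1 / s) *\<^sub>R Q j + (- c / s) *\<^sub>R mat 1" unfolding P_def by simp
      show "(1 / s)^2 * (real CARD('n) + 1) = 1" using ss s0 unfolding d_def by (simp add: field_simps)
      show "1 / s * (- c / s) * (real CARD('n) + 1) = - c" using ss s0 unfolding d_def
        by (simp add: field_simps power2_eq_square)
      show "(- c / s)^2 * (real CARD('n) + 1) = c^2" using ss s0 unfolding d_def
        by (simp add: field_simps power2_eq_square)
      show "c^2 * real CARD('n) - 2 * c = 1" using cm unfolding c_def d_def .
    qed
    moreover have "\<forall>j\<in>?I. Q j = Qminus P j"
    proof
      fix j assume "j \<in> ?I"
      have "Qminus P j = s *\<^sub>R P j + c *\<^sub>R mat 1"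
        unfolding Qminus_def c_def s_def d_def ..
      also have "\<dots> = Q j" unfolding P_def using s0 by (simp add: algebra_simps)
      finally show "Q j = Qminus P j" by simp
    qed
    ultimately show ?thesis by blast
  qed
  have Lbw: "V = Nm" if ex: "\<exists>P. sic P \<and> (\<forall>j\<in>?I. Q j = Qminus P j)"
  proof -
    obtain P where sP: "sic P" and QP: "\<forall>j\<in>?I. Q j = Qminus P j" using ex by blast
    have "- \<mu> j \<le> Nm" if j: "j \<in> ?I" for j
    proof -
      obtain \<psi> where \<psi>: "cinner \<psi> \<psi> = 1" "P j = outer \<psi> \<psi>"
        using sP j rank_one_outer unfolding sic_def by blast
      obtain \<rho> where \<rho>: "density \<rho>" "Re (mtrace (\<rho> ** Q j)) = \<mu> j"
        using lmin_props(2)[OF herm[OF j]] unfolding \<mu>_def by blast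
      have psdr: "psd \<rho>" and tr1: "mtrace \<rho> = 1" using \<rho>(1) unfolding density_def by auto
      have Qj: "Q j = s *\<^sub>R outer \<psi> \<psi> + ((1 - s) / d) *\<^sub>R mat 1"
        using QP j \<psi>(2) unfolding Qminus_def s_def d_def by simp
      have "mtrace (\<rho> ** Q j) = of_real s * mtrace (\<rho> ** outer \<psi> \<psi>) + of_real ((1 - s) / d) * mtrace \<rho>"
        unfolding Qj by (rule trace_affine)
      also have "mtrace (\<rho> ** outer \<psi> \<psi>) = cinner \<psi> (\<rho> *v \<psi>)"
        using trace_comm trace_outer_left by metis
      finally have "\<mu> j = s * Re (cinner \<psi> (\<rho> *v \<psi>)) + (1 - s) / d"
        using \<rho>(2) tr1 by simp
      moreover have "0 \<le> Re (cinner \<psi> (\<rho> *v \<psi>))" by (rule psd_form[OF psdr])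
      ultimately have "(1 - s) / d \<le> \<mu> j" using s1 by simp
      then show ?thesis using Nm_eq by simp
    qed
    then have "V \<le> Nm" by (rule Vle)
    then show ?thesis using P1 by simp
  qed
  have Ufw: "\<exists>P. sic P \<and> (\<forall>j\<in>?I. Q j = Qplus P j)" if VN: "V = Np" and gc: "group_covariant Q"
  proof -
    define c where "c = (1 + s) / d"
    define P where "P j = (- 1 / s) *\<^sub>R Q j + (c / s) *\<^sub>R mat 1" for j
    have mu0: "\<mu> j0 = - Np" using j0 VN by simp
    have mu_eq: "\<mu> k = (1 - (d - 1) * s) / d" if k: "k \<in> ?I" for k
    proof -
      obtain U where U: "U \<in> sym_group Q" "U ** Q j0 ** adj U = Q k"
        using gc j0(1) k unfolding group_covariant_def by blast
      have uU: "unitary U" using U(1) unfolding sym_group_def by simp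
      obtain \<rho> where \<rho>: "density \<rho>" "Re (mtrace (\<rho> ** Q j0)) = \<mu> j0"
        using lmin_props(2)[OF herm[OF j0(1)]] unfolding \<mu>_def by blast
      have "density (U ** \<rho> ** adj U)" by (rule conj_density[OF uU \<rho>(1)])
      then have "\<mu> k \<le> Re (mtrace ((U ** \<rho> ** adj U) ** Q k))"
        using lmin_props(1)[OF herm[OF k]] unfolding \<mu>_def by blast
      also have "mtrace ((U ** \<rho> ** adj U) ** Q k) = mtrace (\<rho> ** Q j0)"
        unfolding U(2)[symmetric] by (rule conj_trace[OF uU])
      finally have "\<mu> k \<le> \<mu> j0" using \<rho>(2) by simp
      then show ?thesis using lo[OF k] mu0 Np_eq by simp
    qed
    have r1: "\<forall>j\<in>?I. \<exists>\<psi>. cinner \<psi> \<psi> = 1 \<and> P j = outer \<psi> \<psi>"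
    proof
      fix j assume j: "j \<in> ?I"
      obtain \<psi> where \<psi>: "cinner \<psi> \<psi> = 1" "Q j = (- s) *\<^sub>R outer \<psi> \<psi> + c *\<^sub>R mat 1"
        using eqp[OF j mu_eq[OF j]] unfolding c_def by blast
      have "P j = outer \<psi> \<psi>" unfolding P_def \<psi>(2) using s0
        by (simp add: algebra_simps)
      then show "\<exists>\<psi>. cinner \<psi> \<psi> = 1 \<and> P j = outer \<psi> \<psi>" using \<psi>(1) by blast
    qed
    have "sic P"
    proof (rule sic_from_affine[OF nq r1, of "- 1 / s" "c / s" c])
      show "\<forall>j\<in>?I. P j = (- 1 / s) *\<^sub>R Q j + (c / s) *\<^sub>R mat 1" unfolding P_def by simp
      show "(- 1 / s)^2 * (real CARD('n) + 1) = 1" using ss s0 unfolding d_def by (simp add: field_simps)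
      show "- 1 / s * (c / s) * (real CARD('n) + 1) = - c" using ss s0 unfolding d_def
        by (simp add: field_simps power2_eq_square)
      show "(c / s)^2 * (real CARD('n) + 1) = c^2" using ss s0 unfolding d_def
        by (simp add: field_simps power2_eq_square)
      show "c^2 * real CARD('n) - 2 * c = 1" using cp unfolding c_def d_def .
    qed
    moreover have "\<forall>j\<in>?I. Q j = Qplus P j"
    proof
      fix j assume "j \<in> ?I"
      have "Qplus P j = (- s) *\<^sub>R P j + c *\<^sub>R mat 1"
        unfolding Qplus_def c_def s_def d_def ..
      also have "\<dots> = Q j" unfolding P_def using s0 by (simp add: algebra_simps)
      finally show "Q j = Qplus P j" by simp
    qed
    ultimately show ?thesis by blast
  qed
  have Ubw: "V = Np" if ex: "\<exists>P. sic P \<and> (\<forall>j\<in>?I. Q j = Qplus P j)"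
  proof -
    obtain P where sP: "sic P" and QP: "\<forall>j\<in>?I. Q j = Qplus P j" using ex by blast
    obtain \<psi> where \<psi>: "cinner \<psi> \<psi> = 1" "P 1 = outer \<psi> \<psi>"
      using sP oneI rank_one_outer unfolding sic_def by blast
    have Q1: "Q 1 = (- s) *\<^sub>R outer \<psi> \<psi> + ((1 + s) / d) *\<^sub>R mat 1"
      using QP oneI \<psi>(2) unfolding Qplus_def s_def d_def by simp
    have dr: "density (outer \<psi> \<psi>)" by (rule outer_density[OF \<psi>(1)])
    have tro: "mtrace (outer \<psi> \<psi>) = 1" using dr unfolding density_def by simp
    have "mtrace (outer \<psi> \<psi> ** Q 1) = of_real (- s) * mtrace (outer \<psi> \<psi> ** outer \<psi> \<psi>) + of_real ((1 + s) / d) * mtrace (outer \<psi> \<psi>)"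
      unfolding Q1 by (rule trace_affine)
    also have "mtrace (outer \<psi> \<psi> ** outer \<psi> \<psi>) = 1"
      unfolding trace_outer_left outer_mult_vec using \<psi>(1) by (simp add: cinner_scale_right)
    finally have "Re (mtrace (outer \<psi> \<psi> ** Q 1)) = - s + (1 + s) / d" using tro by simp
    moreover have "\<mu> 1 \<le> Re (mtrace (outer \<psi> \<psi> ** Q 1))"
      using lmin_props(1)[OF herm[OF oneI] dr] unfolding \<mu>_def .
    moreover have "- s + (1 + s) / d = - Np" unfolding Np_def using dpos by (simp add: field_simps)
    ultimately have "Np \<le> - \<mu> 1" by simp
    then have "Np \<le> V" using Vge[OF oneI] by simp
    then show ?thesis using P2 by simp
  qed
  have A1: "(sqrt (real CARD('n) + 1) - 1) / real CARD('n) = Nm" unfolding Nm_def s_def d_def ..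
  have A2: "((real CARD('n) - 1) * sqrt (real CARD('n) + 1) - 1) / real CARD('n) = Np"
    unfolding Np_def s_def d_def ..
  show ?thesis unfolding A1 A2 NV using P1 P2 Lfw Lbw Ufw Ubw by blast
qed

end
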